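(* Let $p\ge 5$ be a prime and $k$ an integer with $1\le k\le \frac{p-3}{2}$, and put $t=p-1-2k$. Then, modulo $p$, \begin{align*} (-1)^k 4^{2k-1} E_t \equiv{}& 64^t S_t(0, \tfrac{1}{256}) + (12^t + 18^t) S_t(\tfrac{1}{16}, \tfrac{5}{72}) + 12^t S_t(\tfrac{5}{72}, \tfrac{7}{96}) + (6^t + 12^t) S_t(\tfrac{7}{48}, \tfrac{11}{72})\\ &+ (6^t + 12^t) S_t(\tfrac{13}{72}, \tfrac{3}{16}) + (4^t + 8^t + 12^t) S_t(\tfrac{11}{48}, \tfrac{15}{64}) + 18^t S_t(\tfrac{19}{72}, \tfrac{17}{64})\\ &+ (4^t + 8^t + 12^t + 18^t) S_t(\tfrac{17}{64}, \tfrac{13}{48}) + 18^t S_t(\tfrac{19}{48}, \tfrac{29}{72}) + 12^t S_t(\tfrac{41}{96}, \tfrac{7}{16})\\ &+ (2^t + 4^t + 6^t+ 8^t) S_t(\tfrac{15}{32}, \tfrac{23}{48}) + (2^t + 4^t + 6^t + 8^t + 12^t) S_t(\tfrac{23}{48}, \tfrac{31}{64})\\ &+ (2^t + 4^t + 6^t + 8^t + 12^t + 16^t) S_t(\tfrac{31}{64}, \tfrac{35}{72}) + (2^t + 4^t + 8^t + 16^t) S_t(\tfrac{35}{72}, \tfrac{63}{128})\\ &+ (2^t + 4^t + 8^t + 16^t + 32^t) S_t(\tfrac{63}{128}, \tfrac{127}{256}) + (2^t + 4^t + 8^t + 16^t + 32^t + 64^t) S_t(\tfrac{127}{256}, \tfrac{1}{2}).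 \end{align*}
   Context: $E_n$ denotes the $n$th Euler number, defined by $\sec z=\sum_{n\ge0}E_n\frac{z^n}{n!}$ (so $E_2=1$, $E_4=5$). For a prime $p$, an integer $\ell$ and real numbers $0\le x<y\le 1$, $S_\ell(x,y)=\sum_{xp<s<yp} s^\ell$, the sum over integers $s$ strictly between $xp$ and $yp$. Congruences between rational numbers modulo $p$ mean that the difference has $p$-adic valuation at least $1$. *)

theory Defs
  imports "HOL-Computational_Algebra.Computational_Algebra"
begin

definition euler_num :: "nat \<Rightarrow> rat" where
  "euler_num n = fact n * fps_nth (inverse (fps_cos (1::rat))) n"

definition Ssum :: "nat \<Rightarrow> nat \<Rightarrow> rat \<Rightarrow> rat \<Rightarrow> int" where
  "Ssum p l x y = (\<Sum>s\<in>{s::int. x * of_nat p < of_int s \<and> of_int s < y * of_nat p}. s ^ l)"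

text \<open>Congruence of rationals modulo p: the difference has p-adic valuation at least 1
  (i.e. it is zero or a reduced fraction whose numerator is divisible by p).\<close>
definition rat_cong :: "nat \<Rightarrow> rat \<Rightarrow> rat \<Rightarrow> bool" where
  "rat_cong p a b \<longleftrightarrow> (\<exists>m n::int. a - b = of_int m / of_int n \<and> coprime n (int p) \<and> int p dvd m)"

end

theory Submission
  imports Defs "HOL-Number_Theory.Number_Theory"
begin

lemma Ssum_finite: "finite {s::int. (x::rat) * of_nat p < of_int s \<and> of_int s < (y::rat) * of_nat p}"
proof -
  have "{s::int. x * of_nat p < of_int s \<and> of_int s < y * of_nat p} \<subseteq> {\<lfloor>x * of_nat p\<rfloor>..\<lceil>y * of_nat p\<rceil>}"
  proof
    fix s assume "s \<in> {s::int. x * of_nat p < of_int s \<and> of_int s < y * of_nat p}"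
    then have "x * of_nat p < of_int s" "of_int s < y * of_nat p" by auto
    then show "s \<in> {\<lfloor>x * of_nat p\<rfloor>..\<lceil>y * of_nat p\<rceil>}"
      by (auto simp: floor_le_iff le_ceiling_iff)
  qed
  then show ?thesis by (rule finite_subset) simp
qed

lemma Ssum_add:
  assumes "0 \<le> a" "a \<le> b" "\<And>s::int. of_int s \<noteq> a * of_nat p"
  shows "Ssum p t 0 b = Ssum p t 0 a + Ssum p t a b"
proof -
  let ?B = "{s::int. (0::rat) * of_nat p < of_int s \<and> of_int s < b * of_nat p}"
  let ?L = "{s::int. (0::rat) * of_nat p < of_int s \<and> of_int s < a * of_nat p}"
  let ?R = "{s::int. (a::rat) * of_nat p < of_int s \<and> of_int s < b * of_nat p}"
  have ap: "a * of_nat p \<le> b * of_nat p" using assms by (simp add: mult_right_mono)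
  have ap0: "0 \<le> a * of_nat p" using assms by simp
  have eq: "?B = ?L \<union> ?R"
  proof -
    have "\<And>s::int. (of_int s < a * of_nat p) \<or> (a * of_nat p < of_int s)"
      using assms(3) by (metis linorder_neqE)
    then show ?thesis using ap ap0 by auto
  qed
  have disj: "?L \<inter> ?R = {}" by auto
  have "(\<Sum>s\<in>?B. s ^ t) = (\<Sum>s\<in>?L. s ^ t) + (\<Sum>s\<in>?R. s ^ t)"
    unfolding eq by (rule sum.union_disjoint[OF Ssum_finite Ssum_finite disj])
  then show ?thesis unfolding Ssum_def .
qed

lemma Ssum_refl:
  assumes "even t"
  shows "int p dvd Ssum p t a b - Ssum p t (1-b) (1-a)"
proof -
  let ?A = "{s::int. (a::rat) * of_nat p < of_int s \<and> of_int s < b * of_nat p}"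
  let ?B = "{s::int. (1-b) * of_nat p < of_int s \<and> of_int s < (1-a) * of_nat p}"
  have bij: "bij_betw (\<lambda>s. int p - s) ?A ?B"
    by (rule bij_betw_byWitness[where f'="\<lambda>s. int p - s"]) (auto simp: algebra_simps)
  have "Ssum p t (1-b) (1-a) = (\<Sum>s\<in>?A. (int p - s) ^ t)"
    unfolding Ssum_def using sum.reindex_bij_betw[OF bij, of "\<lambda>s. s ^ t"] by simp
  moreover have "[(\<Sum>s\<in>?A. s ^ t) = (\<Sum>s\<in>?A. (int p - s) ^ t)] (mod int p)"
  proof (rule cong_sum)
    fix s
    have "[int p - s = - s] (mod int p)" by (simp add: cong_iff_dvd_diff)
    then have "[(int p - s) ^ t = (- s) ^ t] (mod int p)" by (rule cong_pow)
    then show "[s ^ t = (int p - s) ^ t] (mod int p)" using assms by (simp add: cong_sym)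
  qed
  ultimately show ?thesis unfolding Ssum_def by (simp add: cong_iff_dvd_diff)
qed

lemma Ssum_dist:
  assumes m0: "0 < m" and cop: "coprime (int m) (int p)"
  shows "int p dvd Ssum p t 0 x - int m ^ t * (\<Sum>j<m. Ssum p t (of_nat j / of_nat m) ((x + of_nat j) / of_nat m))"
proof -
  define U where "U = {u::int. (0::rat) * of_nat p < of_int u \<and> of_int u < x * of_nat p}"
  define T where "T = (\<lambda>j::nat. {s::int. (of_nat j / of_nat m * of_nat p :: rat) < of_int s \<and> of_int s < (x + of_nat j) / of_nat m * of_nat p})"
  define \<phi> where "\<phi> = (\<lambda>(j::nat, s::int). int m * s - int j * int p)"
  have mq: "(0::rat) < of_nat m" using m0 by simp
  have memT: "s \<in> T j \<longleftrightarrow> int j * int p < int m * s \<and> (of_int (int m * s)::rat) < x * of_nat p + of_nat j * of_nat p" for j s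
  proof -
    have "s \<in> T j \<longleftrightarrow> (of_nat j * of_nat p::rat) < of_nat m * of_int s \<and> of_nat m * of_int s < (x + of_nat j) * (of_nat p::rat)"
      unfolding T_def using mq by (simp add: field_simps pos_divide_less_eq[OF mq] pos_less_divide_eq[OF mq])
    also have "\<dots> \<longleftrightarrow> int j * int p < int m * s \<and> of_nat m * of_int s < (x + of_nat j) * (of_nat p::rat)"
      by (metis (mono_tags, opaque_lifting) of_int_less_iff of_int_mult of_int_of_nat_eq)
    finally show ?thesis by (simp add: algebra_simps)
  qed
  have inj: "inj_on \<phi> (Sigma {..<m} T)"
  proof (rule inj_onI)
    fix a b assume a: "a \<in> Sigma {..<m} T" and b: "b \<in> Sigma {..<m} T" and e: "\<phi> a = \<phi> b"
    obtain j s where [simp]: "a = (j, s)" by (cases a)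
    obtain j' s' where [simp]: "b = (j', s')" by (cases b)
    have j: "j < m" "j' < m" using a b by auto
    have e': "int m * (s - s') = (int j - int j') * int p" using e by (simp add: \<phi>_def algebra_simps)
    then have "int m dvd (int j - int j') * int p" by (metis dvd_triv_left)
    then have "int m dvd int j - int j'" using cop by (simp add: coprime_dvd_mult_left_iff)
    then obtain c where c: "int j - int j' = int m * c" by blast
    have "c = 0"
    proof (rule ccontr)
      assume "c \<noteq> 0"
      then have "\<bar>int m * c\<bar> \<ge> int m" by (simp add: abs_mult) (metis abs_ge_zero abs_mult_pos mult.commute mult_le_cancel_left1 not_less of_nat_0_le_iff zero_less_abs_iff linorder_not_le int_one_le_iff_zero_less)
      with c j show False by linarith
    qed
    then have "j = j'" using c by simp
    moreover then have "s = s'" using e' m0 by simp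
    ultimately show "a = b" by simp
  qed
  have img: "\<phi> ` (Sigma {..<m} T) = U"
  proof (intro equalityI subsetI)
    fix u assume "u \<in> \<phi> ` (Sigma {..<m} T)"
    then obtain j s where js: "j < m" "s \<in> T j" and u: "u = int m * s - int j * int p"
      by (auto simp: \<phi>_def)
    from js(2) have "int j * int p < int m * s" "(of_int (int m * s)::rat) < x * of_nat p + of_nat j * of_nat p"
      by (auto simp: memT)
    then show "u \<in> U" unfolding U_def u by (simp add: algebra_simps)
  next
    fix u assume uU: "u \<in> U"
    have "coprime (int p) (int m)" using cop by (simp add: coprime_commute)
    then obtain v where v: "[int p * v = 1] (mod int m)" using cong_solve_coprime_int by blast
    define j where "j = nat ((- u * v) mod int m)"
    have j0: "int j = (- u * v) mod int m" unfolding j_def using m0 by simp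
    have jm: "j < m" using m0 j0 by (metis Euclidean_Rings.pos_mod_bound of_nat_0_less_iff of_nat_less_iff)
    have "[u + int j * int p = u + (- u * v) * int p] (mod int m)"
      unfolding j0 by (intro cong_add cong_mult cong_refl) (simp add: cong_def)
    moreover have "[u + (- u * v) * int p = u + (- u) * 1] (mod int m)"
      using v by (metis cong_add cong_mult cong_refl mult.assoc mult.commute)
    ultimately have "[u + int j * int p = 0] (mod int m)" by (metis cong_trans add.right_inverse mult.right_neutral mult_minus_left)
    then have dv: "int m dvd u + int j * int p" by (simp add: cong_0_iff)
    define s where "s = (u + int j * int p) div int m"
    have ms: "int m * s = u + int j * int p" unfolding s_def using dv by simp
    have "s \<in> T j" unfolding memT ms using uU by (simp add: U_def algebra_simps)
    moreover have "u = \<phi> (j, s)" unfolding \<phi>_def using ms by simp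
    ultimately show "u \<in> \<phi> ` (Sigma {..<m} T)" using jm by blast
  qed
  have bij: "bij_betw \<phi> (Sigma {..<m} T) U" using inj img by (simp add: bij_betw_def)
  have finT: "finite (T j)" for j unfolding T_def by (rule Ssum_finite)
  have "Ssum p t 0 x = (\<Sum>u\<in>U. u ^ t)" unfolding Ssum_def U_def ..
  also have "\<dots> = (\<Sum>a\<in>Sigma {..<m} T. (\<phi> a) ^ t)"
    using sum.reindex_bij_betw[OF bij, of "\<lambda>u. u ^ t"] by simp
  finally have e1: "Ssum p t 0 x = (\<Sum>a\<in>Sigma {..<m} T. (\<phi> a) ^ t)" .
  have e2: "[(\<Sum>a\<in>Sigma {..<m} T. (\<phi> a) ^ t) = (\<Sum>a\<in>Sigma {..<m} T. (int m * snd a) ^ t)] (mod int p)"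
  proof (rule cong_sum)
    fix a :: "nat \<times> int"
    obtain j s where [simp]: "a = (j, s)" by (cases a)
    have "[int m * s - int j * int p = int m * s] (mod int p)" by (simp add: cong_iff_dvd_diff)
    then show "[(\<phi> a) ^ t = (int m * snd a) ^ t] (mod int p)" unfolding \<phi>_def by (simp add: cong_pow)
  qed
  have "(\<Sum>a\<in>Sigma {..<m} T. (int m * snd a) ^ t) = (\<Sum>j<m. \<Sum>s\<in>T j. (int m * s) ^ t)"
    by (subst sum.Sigma) (auto simp: finT split_def)
  also have "\<dots> = int m ^ t * (\<Sum>j<m. Ssum p t (of_nat j / of_nat m) ((x + of_nat j) / of_nat m))"
    unfolding Ssum_def T_def by (simp add: power_mult_distrib sum_distrib_left)
  finally have e3: "(\<Sum>a\<in>Sigma {..<m} T. (int m * snd a) ^ t) = int m ^ t * (\<Sum>j<m. Ssum p t (of_nat j / of_nat m) ((x + of_nat j) / of_nat m))" .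
  show ?thesis using e2 unfolding e1 e3 by (simp add: cong_iff_dvd_diff)
qed

lemma Ssum_full:
  assumes pr: "prime p" and t0: "0 < t" and tp: "t < p - 1"
  shows "int p dvd Ssum p t 0 1"
proof -
  obtain a where aT: "a \<in> totatives p" and ord: "ord p a = p - 1"
    using residue_prime_has_primroot[OF pr] by blast
  have p1: "1 < p" using pr prime_gt_1_nat by blast
  have copa: "coprime a p" using aT by (simp add: in_totatives_iff)
  have copi: "coprime (int a) (int p)" using copa by simp
  define A where "A = {1..int p - 1}"
  have setA: "{s::int. (0::rat) * of_nat p < of_int s \<and> (of_int s::rat) < 1 * of_nat p} = A"
  proof -
    have "s \<in> {s::int. (0::rat) * of_nat p < of_int s \<and> (of_int s::rat) < 1 * of_nat p} \<longleftrightarrow> s \<in> A" for s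
    proof -
      have "s \<in> {s::int. (0::rat) * of_nat p < of_int s \<and> (of_int s::rat) < 1 * of_nat p} \<longleftrightarrow> (0::rat) < of_int s \<and> (of_int s::rat) < of_nat p" by simp
      also have "\<dots> \<longleftrightarrow> 0 < s \<and> s < int p" by (metis of_int_0_less_iff of_int_less_iff of_int_of_nat_eq)
      also have "\<dots> \<longleftrightarrow> s \<in> A" unfolding A_def by auto
      finally show ?thesis .
    qed
    then show ?thesis by blast
  qed
  define f where "f = (\<lambda>s. (int a * s) mod int p)"
  have finA: "finite A" unfolding A_def by simp
  have sub: "f ` A \<subseteq> A"
  proof
    fix y assume "y \<in> f ` A"
    then obtain s where s: "s \<in> A" "y = f s" by blast
    have "\<not> int p dvd int a * s"
    proof
      assume "int p dvd int a * s"
      then have "int p dvd s" using copi by (metis coprime_commute coprime_dvd_mult_right_iff)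
      moreover have "0 < s" "s < int p" using s(1) unfolding A_def by auto
      ultimately show False using zdvd_imp_le by fastforce
    qed
    then have "y \<noteq> 0" using s(2) unfolding f_def by (simp add: dvd_eq_mod_eq_0)
    moreover have "0 \<le> y" "y < int p" using s(2) p1 unfolding f_def by auto
    ultimately show "y \<in> A" unfolding A_def by auto
  qed
  have inj: "inj_on f A"
  proof (rule inj_onI)
    fix x y assume x: "x \<in> A" and y: "y \<in> A" and e: "f x = f y"
    then have "[int a * x = int a * y] (mod int p)" unfolding f_def cong_def by blast
    then have "[x = y] (mod int p)" using copi by (metis cong_mult_lcancel)
    then have "x mod int p = y mod int p" by (simp add: cong_def)
    moreover have "x mod int p = x" "y mod int p = y" using x y unfolding A_def by auto
    ultimately show "x = y" by simp
  qed
  have im: "f ` A = A" by (rule endo_inj_surj[OF finA sub inj])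
  define S where "S = (\<Sum>s\<in>A. s ^ t)"
  have e1: "S = (\<Sum>s\<in>A. (f s) ^ t)"
    unfolding S_def using sum.reindex[OF inj, of "\<lambda>s. s ^ t"] im by simp
  have e2: "[(\<Sum>s\<in>A. (f s) ^ t) = (\<Sum>s\<in>A. (int a * s) ^ t)] (mod int p)"
  proof (rule cong_sum)
    fix s
    have "[f s = int a * s] (mod int p)" unfolding f_def cong_def by simp
    then show "[(f s) ^ t = (int a * s) ^ t] (mod int p)" by (rule cong_pow)
  qed
  have e3: "(\<Sum>s\<in>A. (int a * s) ^ t) = int a ^ t * S"
    unfolding S_def by (simp add: power_mult_distrib sum_distrib_left)
  have "[S = int a ^ t * S] (mod int p)"
    using e2 unfolding e1[symmetric] e3 .
  then have "int p dvd S - int a ^ t * S" by (simp add: cong_iff_dvd_diff)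
  then have "int p dvd - (S - int a ^ t * S)" by (simp only: dvd_minus_iff)
  then have "int p dvd (int a ^ t - 1) * S" by (simp add: algebra_simps)
  moreover have "\<not> int p dvd (int a ^ t - 1)"
  proof
    assume "int p dvd (int a ^ t - 1)"
    then have "[int a ^ t = int 1] (mod int p)" by (simp add: cong_iff_dvd_diff)
    then have "[a ^ t = 1] (mod p)" unfolding of_nat_power[symmetric] cong_int_iff .
    then have "ord p a dvd t" by (simp add: ord_divides')
    then show False using ord t0 tp by (simp add: nat_dvd_not_less)
  qed
  ultimately have "int p dvd S" using pr by (simp add: prime_dvd_mult_iff)
  then show ?thesis unfolding Ssum_def setA S_def .
qed

definition gg :: "nat \<Rightarrow> nat \<Rightarrow> nat \<Rightarrow> int" where
  "gg p t i = Ssum p t 0 (of_nat i / 2304)"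

lemma gg0: "gg p t 0 = 0"
proof -
  have e: "{s::int. (0::rat) * of_nat p < of_int s \<and> of_int s < (of_nat 0 / 2304 * of_nat p::rat)} = {}" by auto
  show ?thesis unfolding gg_def Ssum_def e by simp
qed

lemma prime_not_dvd_23:
  fixes p :: nat
  assumes "prime p" "5 \<le> p"
  shows "\<not> p dvd 2" "\<not> p dvd 3"
  using assms by (auto dest: dvd_imp_le)

lemma cop_small:
  assumes "prime p" "5 \<le> p"
  shows "coprime (int 2304) (int p)" "coprime (int 2) (int p)" "coprime (int 3) (int p)"
proof -
  have n2: "\<not> p dvd 2" and n3: "\<not> p dvd 3" using prime_not_dvd_23[OF assms] by auto
  have a: "\<not> p dvd 2 ^ 8" using n2 assms(1) prime_dvd_power by blast
  have b: "\<not> p dvd 3 ^ 2" using n3 assms(1) prime_dvd_power by blast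
  have "\<not> p dvd 2 ^ 8 * 3 ^ 2"
    using assms(1) a b prime_dvd_mult_iff by blast
  moreover have e: "(2304::nat) = 2 ^ 8 * 3 ^ 2" by simp
  ultimately have "\<not> p dvd 2304" by (simp only: e not_False_eq_True)
  then show "coprime (int 2304) (int p)" using assms(1)
    by (metis coprime_commute prime_imp_coprime of_nat_numeral coprime_int_iff)
  show "coprime (int 2) (int p)" using assms(1) n2
    by (metis coprime_commute prime_imp_coprime of_nat_numeral coprime_int_iff)
  show "coprime (int 3) (int p)" using assms(1) n3
    by (metis coprime_commute prime_imp_coprime of_nat_numeral coprime_int_iff)
qed

lemma gg_Ssum:
  assumes "prime p" "5 \<le> p" "0 < i" "i < 2304" "i \<le> j"
  shows "Ssum p t (of_nat i / 2304) (of_nat j / 2304) = gg p t j - gg p t i"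
proof -
  have ni: "(of_int s::rat) \<noteq> of_nat i / 2304 * of_nat p" for s :: int
  proof
    assume "(of_int s::rat) = of_nat i / 2304 * of_nat p"
    then have "(of_int (2304 * s)::rat) = of_int (int i * int p)" by (simp add: field_simps)
    then have "2304 * s = int i * int p" by (simp only: of_int_eq_iff)
    then have "int 2304 dvd int i * int p" by (metis dvd_triv_left of_nat_numeral)
    then have "int 2304 dvd int i" using cop_small[OF assms(1,2)] by (simp add: coprime_dvd_mult_left_iff)
    then show False using assms(3,4) zdvd_imp_le[of "int 2304" "int i"] by simp
  qed
  have "Ssum p t 0 (of_nat j / 2304) = Ssum p t 0 (of_nat i / 2304) + Ssum p t (of_nat i / 2304) (of_nat j / 2304)"
    by (rule Ssum_add) (use assms(5) ni in \<open>auto simp: divide_right_mono\<close>)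
  then show ?thesis unfolding gg_def by simp
qed

lemma D2rel:
  assumes "prime p" "5 \<le> p"
  shows "int p dvd gg p t (2*k) - 2^t * (gg p t k + gg p t (k+1152) - gg p t 1152)"
proof -
  have F: "int p dvd Ssum p t 0 (of_nat (2*k) / 2304) - int 2 ^ t * (\<Sum>j<2. Ssum p t (of_nat j / of_nat 2) ((of_nat (2*k) / 2304 + of_nat j) / of_nat 2))"
    by (rule Ssum_dist) (use cop_small[OF assms] in auto)
  have gs: "Ssum p t (of_nat 1152 / 2304) (of_nat (k+1152) / 2304) = gg p t (k+1152) - gg p t 1152"
    by (rule gg_Ssum) (use assms in auto)
  have e1: "(\<Sum>j<2. Ssum p t (of_nat j / of_nat 2) ((of_nat (2*k) / 2304 + of_nat j) / of_nat 2))
      = gg p t k + gg p t (k+1152) - gg p t 1152"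
    using gs by (simp add: numeral_2_eq_2 field_simps gg_def)
  have e2: "Ssum p t 0 (of_nat (2*k) / 2304) = gg p t (2*k)" by (simp add: gg_def)
  show ?thesis using F unfolding e1 e2 by simp
qed

lemma D3rel:
  assumes "prime p" "5 \<le> p"
  shows "int p dvd gg p t (3*k) - 3^t * (gg p t k + gg p t (k+768) + gg p t (k+1536) - gg p t 768 - gg p t 1536)"
proof -
  have F: "int p dvd Ssum p t 0 (of_nat (3*k) / 2304) - int 3 ^ t * (\<Sum>j<3. Ssum p t (of_nat j / of_nat 3) ((of_nat (3*k) / 2304 + of_nat j) / of_nat 3))"
    by (rule Ssum_dist) (use cop_small[OF assms] in auto)
  have gs1: "Ssum p t (of_nat 768 / 2304) (of_nat (k+768) / 2304) = gg p t (k+768) - gg p t 768"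
    by (rule gg_Ssum) (use assms in auto)
  have gs2: "Ssum p t (of_nat 1536 / 2304) (of_nat (k+1536) / 2304) = gg p t (k+1536) - gg p t 1536"
    by (rule gg_Ssum) (use assms in auto)
  have e1: "(\<Sum>j<3. Ssum p t (of_nat j / of_nat 3) ((of_nat (3*k) / 2304 + of_nat j) / of_nat 3))
      = gg p t k + gg p t (k+768) + gg p t (k+1536) - gg p t 768 - gg p t 1536"
    using gs1 gs2 by (simp add: numeral_3_eq_3 field_simps gg_def)
  have e2: "Ssum p t 0 (of_nat (3*k) / 2304) = gg p t (3*k)" by (simp add: gg_def)
  show ?thesis using F unfolding e1 e2 by simp
qed

lemma Orel:
  assumes "prime p" "5 \<le> p" "even t" "0 < t" "t < p - 1" "i \<le> 2304"
  shows "int p dvd gg p t (2304 - i) + gg p t i"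
proof -
  have full: "int p dvd gg p t 2304" unfolding gg_def using Ssum_full[OF assms(1,4,5)] by simp
  consider "i = 0" | "i = 2304" | "0 < i \<and> i < 2304" using assms(6) by linarith
  then show ?thesis
  proof cases
    case 1 then show ?thesis using full by (simp add: gg0)
  next
    case 2 then show ?thesis using full by (simp add: gg0)
  next
    case 3
    have f1: "int p dvd Ssum p t (of_nat i / 2304) 1 - Ssum p t (1 - 1) (1 - of_nat i / 2304)"
      by (rule Ssum_refl) (rule assms(3))
    have "Ssum p t (of_nat i / 2304) (of_nat 2304 / 2304) = gg p t 2304 - gg p t i"
      by (rule gg_Ssum) (use assms 3 in auto)
    then have f2: "Ssum p t (of_nat i / 2304) 1 = gg p t 2304 - gg p t i" by simp
    have f3: "(1::rat) - of_nat i / 2304 = of_nat (2304 - i) / 2304"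
      using assms(6) by (simp add: of_nat_diff field_simps)
    have f4: "Ssum p t (1 - 1) (1 - of_nat i / 2304) = gg p t (2304 - i)"
      unfolding f3 gg_def by simp
    have "int p dvd gg p t 2304 - gg p t i - gg p t (2304 - i)"
      using f1 unfolding f2 f4 .
    then have "int p dvd gg p t 2304 - (gg p t 2304 - gg p t i - gg p t (2304 - i))"
      by (rule dvd_diff[OF full])
    then show ?thesis by (simp add: algebra_simps)
  qed
qed

definition cc :: "nat \<Rightarrow> rat" where "cc i = (if even i then (-1) ^ (i div 2) else 0)"

lemma sec_rec:
  "(\<Sum>i=0..n. of_nat (n choose i) * cc i * euler_num (n - i)) = (if n = 0 then 1 else 0)"
proof -
  have one: "(fps_cos (1::rat) * inverse (fps_cos 1)) $ n = (if n = 0 then 1 else 0)"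
    by (simp add: inverse_mult_eq_1')
  have "(\<Sum>i=0..n. of_nat (n choose i) * cc i * euler_num (n - i))
      = fact n * (\<Sum>i=0..n. fps_cos (1::rat) $ i * inverse (fps_cos 1) $ (n - i))"
    unfolding sum_distrib_left
  proof (rule sum.cong)
    fix i assume "i \<in> {0..n}"
    then have i: "i \<le> n" by simp
    have "of_nat (n choose i) = (fact n / (fact i * fact (n - i)) :: rat)" using i by (rule binomial_fact)
    then show "of_nat (n choose i) * cc i * euler_num (n - i) = fact n * (fps_cos 1 $ i * inverse (fps_cos 1) $ (n - i))"
      by (simp add: euler_num_def fps_cos_def cc_def field_simps)
  qed simp
  also have "\<dots> = fact n * (if n = 0 then 1 else 0)" using one by (simp add: fps_mult_nth)
  finally show ?thesis by simp
qed

lemma cc_Ints: "cc i \<in> \<int>" unfolding cc_def by auto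

lemma euler_Ints: "euler_num n \<in> \<int>"
proof (induction n rule: less_induct)
  case (less n)
  show ?case
  proof (cases "n = 0")
    case True
    have "euler_num 0 = 1" using sec_rec[of 0] by (simp add: cc_def)
    then show ?thesis using True by simp
  next
    case False
    have "(\<Sum>i=0..n. of_nat (n choose i) * cc i * euler_num (n - i))
        = of_nat (n choose 0) * cc 0 * euler_num (n - 0) + (\<Sum>i=Suc 0..n. of_nat (n choose i) * cc i * euler_num (n - i))"
      by (rule sum.atLeast_Suc_atMost) simp
    then have "euler_num n = - (\<Sum>i=Suc 0..n. of_nat (n choose i) * cc i * euler_num (n - i))"
      using sec_rec[of n] False by (simp add: cc_def)
    moreover have "(\<Sum>i=Suc 0..n. of_nat (n choose i) * cc i * euler_num (n - i)) \<in> \<int>"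
    proof (rule Ints_sum)
      fix i assume "i \<in> {Suc 0..n}"
      then have "n - i < n" using False by auto
      then have "euler_num (n - i) \<in> \<int>" by (rule less.IH)
      then show "of_nat (n choose i) * cc i * euler_num (n - i) \<in> \<int>"
        using cc_Ints by (intro Ints_mult) auto
    qed
    ultimately show ?thesis by simp
  qed
qed

definition ei :: "nat \<Rightarrow> int" where "ei n = \<lfloor>euler_num n\<rfloor>"

lemma ei_eq: "euler_num n = of_int (ei n)"
  unfolding ei_def using euler_Ints by (metis Ints_cases floor_of_int)

definition cci :: "nat \<Rightarrow> int" where "cci i = (if even i then (-1) ^ (i div 2) else 0)"
definition si :: "nat \<Rightarrow> int" where "si k = cci k * ei k"

lemma si_rat: "(of_int (si k)::rat) = cc k * euler_num k"
  unfolding si_def cci_def cc_def ei_eq by simp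

lemma si_odd: "odd k \<Longrightarrow> si k = 0" unfolding si_def cci_def by simp

lemma neg1_pow_aux: "b \<le> a \<Longrightarrow> (-1::rat) ^ a * (-1) ^ (a - b) = (-1) ^ b"
proof -
  assume "b \<le> a"
  then have "a = (a - b) + b" by simp
  then have "(-1::rat) ^ a = (-1) ^ (a - b) * (-1) ^ b" by (metis power_add)
  then have "(-1::rat) ^ a * (-1) ^ (a - b) = ((-1) ^ (a - b)) ^ 2 * (-1) ^ b" by (simp add: power2_eq_square)
  also have "\<dots> = (-1) ^ b" by (simp add: power_mult[symmetric] mult.commute[of "a-b"] power_mult)
  finally show ?thesis .
qed

lemma R_rec:
  "(\<Sum>k=0..n. of_nat (n choose k) * of_int (si k) * (1 + (-1::rat) ^ (n - k))) = (if n = 0 then 2 else 0)"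
proof (cases "even n")
  case False
  have "(\<Sum>k=0..n. of_nat (n choose k) * of_int (si k) * (1 + (-1::rat) ^ (n - k))) = 0"
  proof (rule sum.neutral, rule ballI)
    fix k assume "k \<in> {0..n}"
    then have k: "k \<le> n" by simp
    show "of_nat (n choose k) * of_int (si k) * (1 + (-1::rat) ^ (n - k)) = 0"
    proof (cases "even k")
      case True
      then have "odd (n - k)" using False k by simp
      then show ?thesis by simp
    next
      case False
      then show ?thesis by (simp add: si_odd)
    qed
  qed
  moreover have "n \<noteq> 0" using False by (metis even_zero)
  ultimately show ?thesis by simp
next
  case True
  then obtain a where a: "n = 2 * a" by blast
  have "(\<Sum>k=0..n. of_nat (n choose k) * of_int (si k) * (1 + (-1::rat) ^ (n - k)))
      = (\<Sum>k=0..n. 2 * (-1) ^ a * (of_nat (n choose k) * cc (n - k) * euler_num k))"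
  proof (rule sum.cong)
    fix k assume "k \<in> {0..n}"
    then have k: "k \<le> n" by simp
    show "of_nat (n choose k) * of_int (si k) * (1 + (-1::rat) ^ (n - k)) = 2 * (-1) ^ a * (of_nat (n choose k) * cc (n - k) * euler_num k)"
    proof (cases "even k")
      case True
      then obtain b where b: "k = 2 * b" by blast
      have ba: "b \<le> a" using k a b by simp
      have nk: "n - k = 2 * (a - b)" using a b by simp
      have pw: "(-1::rat) ^ a * (-1) ^ (a - b) = (-1) ^ b" using ba by (rule neg1_pow_aux)
      have c1: "cc (n - k) = (-1) ^ (a - b)" unfolding nk cc_def by simp
      have c2: "of_int (si k) = (-1) ^ b * euler_num k" unfolding si_rat b cc_def by simp
      have c3: "(1 + (-1::rat) ^ (n - k)) = 2" unfolding nk by simp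
      have "2 * (-1) ^ a * (of_nat (n choose k) * cc (n - k) * euler_num k)
          = 2 * (of_nat (n choose k) * euler_num k) * ((-1::rat) ^ a * (-1) ^ (a - b))"
        unfolding c1 by (simp add: algebra_simps)
      also have "\<dots> = of_nat (n choose k) * of_int (si k) * (1 + (-1::rat) ^ (n - k))"
        unfolding pw c2 c3 by (simp add: algebra_simps)
      finally show ?thesis by (rule sym)
    next
      case False
      then have "odd (n - k)" using True k by simp
      then show ?thesis using False by (simp add: si_odd cc_def)
    qed
  qed simp
  also have "\<dots> = 2 * (-1) ^ a * (\<Sum>k=0..n. of_nat (n choose k) * cc (n - k) * euler_num k)"
    by (simp add: sum_distrib_left)
  also have "(\<Sum>k=0..n. of_nat (n choose k) * cc (n - k) * euler_num k) = (\<Sum>i=0..n. of_nat (n choose i) * cc i * euler_num (n - i))"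
    by (subst sum.atLeastAtMost_rev) (auto intro!: sum.cong simp: binomial_symmetric[symmetric])
  also have "\<dots> = (if n = 0 then 1 else 0)" by (rule sec_rec)
  finally show ?thesis using a by auto
qed

definition Sf :: "rat fps" where "Sf = Abs_fps (\<lambda>k. of_int (si k) / fact k)"

lemma SH: "Sf * (fps_exp 1 + fps_exp (-1)) = 2"
proof (rule fps_ext)
  fix n
  have "(Sf * (fps_exp 1 + fps_exp (-1))) $ n = (\<Sum>k=0..n. of_int (si k) / fact k * ((1 + (-1) ^ (n - k)) / fact (n - k)))"
    by (simp add: fps_mult_nth Sf_def add_divide_distrib)
  also have "\<dots> = (\<Sum>k=0..n. of_nat (n choose k) * of_int (si k) * (1 + (-1::rat) ^ (n - k))) / fact n"
    unfolding sum_divide_distrib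
  proof (rule sum.cong)
    fix k assume "k \<in> {0..n}"
    then have k: "k \<le> n" by simp
    have C: "of_nat (n choose k) = (fact n / (fact k * fact (n - k)) :: rat)" using k by (rule binomial_fact)
    show "of_int (si k) / fact k * ((1 + (-1) ^ (n - k)) / fact (n - k)) = of_nat (n choose k) * of_int (si k) * (1 + (-1::rat) ^ (n - k)) / fact n"
      unfolding C by (simp add: field_simps)
  qed simp
  also have "\<dots> = (if n = 0 then 2 else 0)" unfolding R_rec by simp
  also have "\<dots> = (2::rat fps) $ n" by (simp add: numeral_fps_const)
  finally show "(Sf * (fps_exp 1 + fps_exp (-1))) $ n = (2::rat fps) $ n" .
qed

definition Fr :: "nat \<Rightarrow> rat \<Rightarrow> rat" where
  "Fr t w = (\<Sum>k=0..t. of_nat (t choose k) * of_int (si k) * w ^ (t - k))"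

lemma Sf_exp_nth: "(Sf * fps_exp w) $ t = Fr t w / fact t"
proof -
  have "(Sf * fps_exp w) $ t = (\<Sum>k=0..t. of_int (si k) / fact k * (w ^ (t - k) / fact (t - k)))"
    by (simp add: fps_mult_nth Sf_def)
  also have "\<dots> = (\<Sum>k=0..t. of_nat (t choose k) * of_int (si k) * w ^ (t - k) / fact t)"
  proof (rule sum.cong)
    fix k assume "k \<in> {0..t}"
    then have k: "k \<le> t" by simp
    have C: "of_nat (t choose k) = (fact t / (fact k * fact (t - k)) :: rat)" using k by (rule binomial_fact)
    show "of_int (si k) / fact k * (w ^ (t - k) / fact (t - k)) = of_nat (t choose k) * of_int (si k) * w ^ (t - k) / fact t"
      unfolding C by (simp add: field_simps)
  qed simp
  also have "\<dots> = Fr t w / fact t" unfolding Fr_def sum_divide_distrib ..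
  finally show ?thesis .
qed

lemma Fr_rec: "Fr t (w + 1) + Fr t (w - 1) = 2 * w ^ t"
proof -
  have e1: "fps_exp (w + 1) = fps_exp w * fps_exp 1" by (rule fps_exp_add_mult)
  have e2: "fps_exp (w - 1) = fps_exp w * fps_exp (-1)" using fps_exp_add_mult[of w "-1"] by simp
  have "Sf * (fps_exp (w + 1) + fps_exp (w - 1)) = Sf * (fps_exp 1 + fps_exp (-1)) * fps_exp w"
    unfolding e1 e2 by (simp add: algebra_simps)
  also have "\<dots> = 2 * fps_exp w" unfolding SH ..
  finally have e: "(Sf * fps_exp (w + 1)) $ t + (Sf * fps_exp (w - 1)) $ t = (2 * fps_exp w) $ t"
    by (metis distrib_left fps_add_nth)
  have "(2 * fps_exp w) $ t = 2 * (w ^ t / fact t)" by (simp add: numeral_fps_const)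
  then have "Fr t (w + 1) / fact t + Fr t (w - 1) / fact t = 2 * (w ^ t / fact t)"
    using e unfolding Sf_exp_nth by simp
  then show ?thesis by (simp add: field_simps)
qed

lemma Fr_one:
  assumes "even t" "0 < t"
  shows "Fr t 1 = 0"
proof -
  have "Fr t (-1) = Fr t 1"
    unfolding Fr_def
  proof (rule sum.cong)
    fix k assume "k \<in> {0..t}"
    then have k: "k \<le> t" by simp
    show "of_nat (t choose k) * of_int (si k) * (-1) ^ (t - k) = of_nat (t choose k) * of_int (si k) * (1::rat) ^ (t - k)"
    proof (cases "even k")
      case True
      then have "even (t - k)" using assms k by simp
      then show ?thesis by simp
    qed (simp add: si_odd)
  qed simp
  moreover have "Fr t (0 + 1) + Fr t (0 - 1) = 2 * 0 ^ t" by (rule Fr_rec)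
  ultimately show ?thesis using assms by simp
qed

lemma telescope:
  assumes "even t" "0 < t"
  shows "2 ^ (t+1) * (\<Sum>s=1..n. (-1) ^ s * of_nat s ^ t) = (-1) ^ n * Fr t (2 * of_nat n + 1)"
proof (induction n)
  case 0
  show ?case using Fr_one[OF assms] by simp
next
  case (Suc n)
  have r: "Fr t ((2 * of_nat n + 2) + 1) + Fr t ((2 * of_nat n + 2) - 1) = 2 * (2 * of_nat n + 2) ^ t"
    by (rule Fr_rec)
  have a1: "(2 * of_nat n + 2) + 1 = 2 * of_nat (Suc n) + (1::rat)" by simp
  have a2: "(2 * of_nat n + 2) - 1 = 2 * of_nat n + (1::rat)" by simp
  have a3: "(2 * of_nat n + 2 :: rat) ^ t = 2 ^ t * of_nat (Suc n) ^ t"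
    by (simp add: power_mult_distrib[symmetric] algebra_simps)
  have "2 ^ (t+1) * (\<Sum>s=1..Suc n. (-1) ^ s * of_nat s ^ t)
      = 2 ^ (t+1) * (\<Sum>s=1..n. (-1) ^ s * of_nat s ^ t) + 2 ^ (t+1) * ((-1) ^ Suc n * of_nat (Suc n) ^ t :: rat)"
    by (simp add: algebra_simps)
  also have "\<dots> = (-1) ^ n * Fr t (2 * of_nat n + 1) + (-1) ^ Suc n * (2 * (2 ^ t * of_nat (Suc n) ^ t))"
    unfolding Suc.IH by (simp add: algebra_simps)
  also have "\<dots> = (-1) ^ n * Fr t (2 * of_nat n + 1) + (-1) ^ Suc n * (Fr t (2 * of_nat (Suc n) + 1) + Fr t (2 * of_nat n + 1))"
    using r unfolding a1 a2 a3 by simp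
  also have "\<dots> = (-1) ^ Suc n * Fr t (2 * of_nat (Suc n) + 1)"
    by (simp add: algebra_simps)
  finally show ?case .
qed

definition Fi :: "nat \<Rightarrow> int \<Rightarrow> int" where
  "Fi t w = (\<Sum>k=0..t. int (t choose k) * si k * w ^ (t - k))"

lemma Fr_Fi: "Fr t (of_int w) = of_int (Fi t w)"
  unfolding Fr_def Fi_def by simp

lemma Fi_mod: "w dvd Fi t w - si t"
proof -
  have "Fi t w = (\<Sum>k\<in>{0..<t}. int (t choose k) * si k * w ^ (t - k)) + si t"
    unfolding Fi_def by (simp add: atLeast0AtMost atLeast0LessThan lessThan_Suc_atMost[symmetric])
  moreover have "w dvd (\<Sum>k\<in>{0..<t}. int (t choose k) * si k * w ^ (t - k))"
  proof (rule dvd_sum)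
    fix k assume "k \<in> {0..<t}"
    then have "t - k = Suc (t - k - 1)" by simp
    then show "w dvd int (t choose k) * si k * w ^ (t - k)" by (metis dvd_mult dvd_triv_left power_Suc)
  qed
  ultimately show ?thesis by simp
qed

lemma gg_interval:
  assumes d: "0 < d" "i * d = 2304" and p: "0 < p"
  shows "gg p t i = (\<Sum>s=1..(p - 1) div d. int s ^ t)"
proof -
  have key: "((of_int s::rat) < of_nat i / 2304 * of_nat p) \<longleftrightarrow> int d * s < int p" for s :: int
  proof -
    have "(of_nat i / 2304 * of_nat p :: rat) = of_nat p / of_nat d"
      using d by (simp add: field_simps) (metis of_nat_mult of_nat_numeral)
    then have "((of_int s::rat) < of_nat i / 2304 * of_nat p) \<longleftrightarrow> of_nat d * of_int s < (of_nat p::rat)"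
      using d by (simp add: pos_less_divide_eq mult.commute)
    also have "\<dots> \<longleftrightarrow> int d * s < int p"
      by (metis of_int_less_iff of_int_mult of_int_of_nat_eq)
    finally show ?thesis .
  qed
  have set: "{s::int. (0::rat) * of_nat p < of_int s \<and> of_int s < (of_nat i / 2304 * of_nat p :: rat)} = int ` {1..(p - 1) div d}"
  proof (intro equalityI subsetI)
    fix s assume "s \<in> {s::int. (0::rat) * of_nat p < of_int s \<and> of_int s < (of_nat i / 2304 * of_nat p :: rat)}"
    then have s0: "0 < s" and sd: "int d * s < int p" using key by auto
    have "nat s \<in> {1..(p - 1) div d}"
    proof -
      have eq: "int (d * nat s) = int d * s" using s0 by simp
      have "int (d * nat s) < int p" by (simp only: eq sd)
      then have "d * nat s < p" by (simp only: of_nat_less_iff)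
      then have "d * nat s \<le> p - 1" by simp
      then have "nat s \<le> (p - 1) div d" using d(1) by (simp add: less_eq_div_iff_mult_less_eq mult.commute)
      then show ?thesis using s0 by simp
    qed
    moreover have "s = int (nat s)" using s0 by simp
    ultimately show "s \<in> int ` {1..(p - 1) div d}" by blast
  next
    fix s assume "s \<in> int ` {1..(p - 1) div d}"
    then obtain x where x: "1 \<le> x" "x \<le> (p - 1) div d" and s: "s = int x" by auto
    have "x * d \<le> p - 1" using x(2) d(1) by (simp add: less_eq_div_iff_mult_less_eq)
    then have "d * x < p" using p by (simp add: mult.commute)
    then have "int d * s < int p" using s by (metis of_nat_less_iff of_nat_mult)
    then show "s \<in> {s::int. (0::rat) * of_nat p < of_int s \<and> of_int s < (of_nat i / 2304 * of_nat p :: rat)}"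
      using key s x by auto
  qed
  show ?thesis unfolding gg_def Ssum_def set by (simp add: sum.reindex)
qed

lemma parity_sum:
  "(\<Sum>s=1..n. (-1) ^ s * int s ^ t) + (\<Sum>s=1..n. int s ^ t) = 2 * 2 ^ t * (\<Sum>r=1..n div 2. int r ^ t)"
proof (induction n)
  case 0 then show ?case by simp
next
  case (Suc n)
  show ?case
  proof (cases "even (Suc n)")
    case True
    then have h0: "Suc n div 2 = Suc (n div 2)" "Suc n = 2 * Suc (n div 2)" by presburger+
    then have h: "Suc n div 2 = Suc (n div 2)" "int (Suc n) = 2 * int (Suc (n div 2))"
      by (metis of_nat_mult of_nat_numeral)+
    have "(\<Sum>s=1..Suc n. (-1) ^ s * int s ^ t) + (\<Sum>s=1..Suc n. int s ^ t)
        = ((\<Sum>s=1..n. (-1) ^ s * int s ^ t) + (\<Sum>s=1..n. int s ^ t)) + ((-1) ^ Suc n + 1) * int (Suc n) ^ t"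
      by (simp add: algebra_simps)
    also have "\<dots> = 2 * 2 ^ t * (\<Sum>r=1..n div 2. int r ^ t) + 2 * (2 * int (Suc (n div 2))) ^ t"
      unfolding Suc.IH using True h(2) by (simp add: neg_one_even_power)
    also have "\<dots> = 2 * 2 ^ t * (\<Sum>r=1..Suc n div 2. int r ^ t)"
      unfolding h(1) power_mult_distrib by (simp add: algebra_simps)
    finally show ?thesis .
  next
    case False
    then have h: "Suc n div 2 = n div 2" by presburger
    have "(\<Sum>s=1..Suc n. (-1) ^ s * int s ^ t) + (\<Sum>s=1..Suc n. int s ^ t)
        = ((\<Sum>s=1..n. (-1) ^ s * int s ^ t) + (\<Sum>s=1..n. int s ^ t)) + ((-1) ^ Suc n + 1) * int (Suc n) ^ t"
      by (simp add: algebra_simps)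
    also have "\<dots> = 2 * 2 ^ t * (\<Sum>r=1..Suc n div 2. int r ^ t)"
      unfolding Suc.IH h using False by (simp add: neg_one_odd_power)
    finally show ?thesis .
  qed
qed

lemma euler_part:
  fixes p k t :: nat
  assumes pr: "prime p" and p5: "p \<ge> 5" and k1: "1 \<le> k" and k2: "2 * k \<le> p - 3"
    and tdef: "t = p - 1 - 2 * k"
  shows "int p dvd (-1) ^ k * 4 ^ (2 * k - 1) * ei t - gg p t 576"
proof -
  have podd: "odd p" using pr p5 by (metis prime_odd_nat less_le_trans numeral_less_iff semiring_norm(76) numeral_le_iff not_le  semiring_norm(72) semiring_norm(69) le_less)
  then obtain n where pn: "p = 2 * n + 1" by (metis oddE)
  have tev: "even t" using tdef pn by simp
  have t0: "0 < t" using tdef k2 p5 by simp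
  have tp: "t < p - 1" using tdef k1 k2 p5 by arith
  have nk: "n = t div 2 + k" using tdef pn k2 by presburger
  have tel: "2 ^ (t+1) * (\<Sum>s=1..n. (-1) ^ s * of_nat s ^ t) = (-1) ^ n * Fr t (2 * of_nat n + 1)"
    by (rule telescope[OF tev t0])
  have fr: "Fr t (2 * of_nat n + 1) = of_int (Fi t (int p))" using Fr_Fi[of t "int p"] pn by (simp add: add.commute)
  have tel2: "of_int (2 ^ (t+1) * (\<Sum>s=1..n. (-1) ^ s * int s ^ t)) = (of_int ((-1) ^ n * Fi t (int p)) :: rat)"
    using tel unfolding fr by simp
  define A where "A = (\<Sum>s=1..n. (-1) ^ s * int s ^ t)"
  define B where "B = (\<Sum>s=1..n. int s ^ t)"
  define C where "C = (\<Sum>r=1..n div 2. int r ^ t)"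
  have e1: "2 ^ (t+1) * A = (-1) ^ n * Fi t (int p)" using tel2 unfolding A_def of_int_eq_iff .
  have e2: "A + B = 2 * 2 ^ t * C" unfolding A_def B_def C_def by (rule parity_sum)
  have hB: "B = gg p t 1152" unfolding B_def using gg_interval[of 2 1152 p t] pn by simp
  have hC: "C = gg p t 576" unfolding C_def using gg_interval[of 4 576 p t] pn by (simp add: div_mult2_eq[symmetric])
  have "int p dvd gg p t (2304 - 1152) + gg p t 1152" by (rule Orel[OF pr p5 tev t0 tp]) simp
  then have "int p dvd 2 * B" unfolding hB by simp
  moreover have "\<not> int p dvd 2" using prime_not_dvd_23[OF pr p5] by (metis of_nat_numeral int_dvd_int_iff)
  ultimately have dB: "int p dvd B" using pr by (simp add: prime_dvd_mult_iff)
  have dF: "int p dvd Fi t (int p) - si t" by (rule Fi_mod)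
  have si_t: "si t = (-1) ^ (t div 2) * ei t" unfolding si_def cci_def using tev by simp
  have sgn: "(-1::int) ^ n * (-1) ^ (t div 2) = (-1) ^ k"
  proof -
    have "(-1::int) ^ n * (-1) ^ (t div 2) = (-1) ^ (2 * (t div 2) + k)" unfolding nk by (simp add: power_add algebra_simps)
    also have "\<dots> = (-1) ^ k" by (simp add: power_add)
    finally show ?thesis .
  qed
  have "4 ^ (t+1) * C - (-1) ^ k * ei t = 2 ^ (t+1) * B + (-1) ^ n * (Fi t (int p) - si t)"
  proof -
    have "(4::int) ^ (t+1) = 2 ^ (t+1) * (2 * 2 ^ t)" by (simp add: power_mult_distrib[symmetric])
    then have "4 ^ (t+1) * C = 2 ^ (t+1) * (A + B)" unfolding e2 by simp
    also have "\<dots> = (-1) ^ n * Fi t (int p) + 2 ^ (t+1) * B" using e1 by (simp add: algebra_simps)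
    finally show ?thesis using sgn si_t by (simp add: algebra_simps)
  qed
  then have d1: "int p dvd 4 ^ (t+1) * C - (-1) ^ k * ei t" using dB dF by simp
  have ex: "2 * k - 1 + (t + 1) = p - 1" using tdef k1 k2 by simp
  have "int p dvd 4 ^ (2 * k - 1) * (4 ^ (t+1) * C - (-1) ^ k * ei t)" using d1 by simp
  moreover have pe: "(4::int) ^ (2 * k - 1) * 4 ^ (t+1) = 4 ^ (p - 1)" unfolding power_add[symmetric] ex ..
  moreover have "(4::int) ^ (2 * k - 1) * (4 ^ (t+1) * C - (-1) ^ k * ei t) = (4 ^ (2 * k - 1) * 4 ^ (t+1)) * C - (-1) ^ k * 4 ^ (2 * k - 1) * ei t"
    by (simp add: algebra_simps)
  ultimately have d2: "int p dvd 4 ^ (p - 1) * C - (-1) ^ k * 4 ^ (2 * k - 1) * ei t"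
    by simp
  have "\<not> p dvd 4"
  proof
    assume "p dvd 4"
    then have "p \<le> 4" by (simp add: dvd_imp_le)
    then show False using p5 by simp
  qed
  then have "[4 ^ (p - 1) = 1] (mod p)" using fermat_theorem[OF pr] by simp
  then have "[int (4 ^ (p - 1)) = int 1] (mod int p)" using cong_int_iff by blast
  then have "int p dvd 4 ^ (p - 1) - 1" by (simp add: cong_iff_dvd_diff)
  then have d3: "int p dvd (4 ^ (p - 1) - 1) * C" by simp
  have "int p dvd (4 ^ (p - 1) * C - (-1) ^ k * 4 ^ (2 * k - 1) * ei t) - (4 ^ (p - 1) - 1) * C"
    using d2 d3 by (rule dvd_diff)
  then have "int p dvd C - (-1) ^ k * 4 ^ (2 * k - 1) * ei t" by (simp add: algebra_simps)
  then have "int p dvd - (C - (-1) ^ k * 4 ^ (2 * k - 1) * ei t)" by (simp only: dvd_minus_iff)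
  then show ?thesis unfolding hC by (simp add: algebra_simps)
qed

definition Rd2 :: "(nat \<Rightarrow> int) \<Rightarrow> int \<Rightarrow> nat \<Rightarrow> int" where
  "Rd2 g X k = g (2*k) - X * (g k + g (k+1152) - g 1152)"
definition Rd3 :: "(nat \<Rightarrow> int) \<Rightarrow> int \<Rightarrow> nat \<Rightarrow> int" where
  "Rd3 g Y k = g (3*k) - Y * (g k + g (k+768) + g (k+1536) - g 768 - g 1536)"
definition Ro :: "(nat \<Rightarrow> int) \<Rightarrow> nat \<Rightarrow> int" where
  "Ro g i = g (2304 - i) + g i"

lemma comb:
  fixes g :: "nat \<Rightarrow> int" and X Y :: int
  shows "(X*X*X*X*X*X) * (g 9 - g 0)
     + ((X*X) * Y + X * (Y*Y)) * (g 160 - g 144)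
     + (X*X) * Y * (g 168 - g 160)
     + (X * Y + (X*X) * Y) * (g 352 - g 336)
     + (X * Y + (X*X) * Y) * (g 432 - g 416)
     + ((X*X) + (X*X*X) + (X*X) * Y) * (g 540 - g 528)
     + X * (Y*Y) * (g 612 - g 608)
     + ((X*X) + (X*X*X) + (X*X) * Y + X * (Y*Y)) * (g 624 - g 612)
     + X * (Y*Y) * (g 928 - g 912)
     + (X*X) * Y * (g 1008 - g 984)
     + (X + (X*X) + X * Y + (X*X*X)) * (g 1104 - g 1080)
     + (X + (X*X) + X * Y + (X*X*X) + (X*X) * Y) * (g 1116 - g 1104)
     + (X + (X*X) + X * Y + (X*X*X) + (X*X) * Y + (X*X*X*X)) * (g 1120 - g 1116)
     + (X + (X*X) + (X*X*X) + (X*X*X*X)) * (g 1134 - g 1120)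
     + (X + (X*X) + (X*X*X) + (X*X*X*X) + (X*X*X*X*X)) * (g 1143 - g 1134)
     + (X + (X*X) + (X*X*X) + (X*X*X*X) + (X*X*X*X*X) + (X*X*X*X*X*X)) * (g 1152 - g 1143) - g 576 =
       Rd2 g X 0
     + Rd2 g X 72
     + (-1) * (Rd2 g X 96)
     + (-1) * (Rd2 g X 216)
     + Rd2 g X 288
     + (2) * (Rd2 g X 864)
     + (-1) * (Rd2 g X 936)
     + (-1) * (Rd2 g X 1008)
     + Rd2 g X 1080
     + (Y * Rd2 g X 72)
     + (-1) * (Y * Rd2 g X 96)
     + (Y * Rd2 g X 416)
     + (-1) * (Y * Rd2 g X 432)
     + (-1) * (Y * Rd2 g X 672)
     + (Y * Rd2 g X 720)
     + (Y * Rd2 g X 800)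
     + (-1) * (Y * Rd2 g X 816)
     + (-1) * (Y * Rd2 g X 1056)
     + (Y * Rd2 g X 1080)
     + (Y * Rd2 g X 1104)
     + (-1) * (Y * Rd2 g X 1120)
     + ((Y*Y) * Rd2 g X 608)
     + (-1) * ((Y*Y) * Rd2 g X 624)
     + ((Y*Y) * Rd2 g X 912)
     + (-1) * ((Y*Y) * Rd2 g X 928)
     + ((Y*Y) * Rd2 g X 992)
     + (-1) * ((Y*Y) * Rd2 g X 1008)
     + (X * Rd2 g X 0)
     + (X * Rd2 g X 72)
     + (-1) * (X * Rd2 g X 96)
     + (X * Rd2 g X 612)
     + (-1) * (X * Rd2 g X 624)
     + (-1) * (X * Rd2 g X 684)
     + (X * Rd2 g X 720)
     + (X * Rd2 g X 1080)
     + (X * Y * Rd2 g X 416)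
     + (-1) * (X * Y * Rd2 g X 432)
     + (X * Y * Rd2 g X 528)
     + (-1) * (X * Y * Rd2 g X 540)
     + (X * Y * Rd2 g X 612)
     + (-1) * (X * Y * Rd2 g X 624)
     + (X * Y * Rd2 g X 800)
     + (-1) * (X * Y * Rd2 g X 816)
     + (X * Y * Rd2 g X 912)
     + (-1) * (X * Y * Rd2 g X 924)
     + (X * Y * Rd2 g X 984)
     + (X * Y * Rd2 g X 996)
     + (-2) * (X * Y * Rd2 g X 1008)
     + (X * Y * Rd2 g X 1104)
     + (-1) * (X * Y * Rd2 g X 1120)
     + ((X*X) * Rd2 g X 0)
     + ((X*X) * Rd2 g X 612)
     + (-1) * ((X*X) * Rd2 g X 624)
     + ((X*X) * Rd2 g X 1080)
     + ((X*X*X) * Rd2 g X 0)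
     + ((X*X*X) * Rd2 g X 1116)
     + ((X*X*X*X) * Rd2 g X 0)
     + ((X*X*X*X) * Rd2 g X 1134)
     + ((X*X*X*X*X) * Rd2 g X 0)
     + ((X*X*X*X*X) * Rd2 g X 1143)
     + Rd3 g Y 64
     + (-1) * (Rd3 g Y 96)
     + (Y * Rd3 g Y 448)
     + (-1) * (Y * Rd3 g Y 480)
     + (-1) * (X * Rd3 g Y 32)
     + (X * Rd3 g Y 48)
     + (X * Rd3 g Y 64)
     + (-1) * (X * Rd3 g Y 96)
     + (2) * (X * Rd3 g Y 288)
     + (-1) * (X * Rd3 g Y 312)
     + (-1) * (X * Rd3 g Y 336)
     + (-1) * (X * Y * Rd3 g Y 224)
     + (X * Y * Rd3 g Y 240)
     + (-1) * ((X*X) * Rd3 g Y 32)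
     + ((X*X) * Rd3 g Y 48)
     + (-1) * ((X*X) * Rd3 g Y 144)
     + ((X*X) * Rd3 g Y 156)
     + (-1) * ((X*X) * Rd3 g Y 228)
     + ((X*X) * Rd3 g Y 240)
     + (-1) * (Ro g 144)
     + Ro g 288
     + Ro g 432
     + (-2) * (Ro g 576)
     + (Y * Ro g 64)
     + (-1) * (Y * Ro g 96)
     + (-1) * (Y * Ro g 144)
     + (Y * Ro g 192)
     + ((Y*Y) * Ro g 448)
     + (-1) * ((Y*Y) * Ro g 480)
     + (X * Ro g 72)
     + (-2) * (X * Ro g 144)
     + (-1) * (X * Ro g 216)
     + (2) * (X * Ro g 288)
     + (-1) * (X * Y * Ro g 32)
     + (X * Y * Ro g 48)
     + (X * Y * Ro g 64)
     + (X * Y * Ro g 72)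
     + (-2) * (X * Y * Ro g 96)
     + (2) * (X * Y * Ro g 288)
     + (-1) * (X * Y * Ro g 312)
     + (-2) * (X * Y * Ro g 336)
     + (X * Y * Ro g 352)
     + (-1) * (X * (Y*Y) * Ro g 144)
     + (X * (Y*Y) * Ro g 160)
     + (-1) * (X * (Y*Y) * Ro g 224)
     + (X * (Y*Y) * Ro g 240)
     + ((X*X) * Ro g 72)
     + (-1) * ((X*X) * Ro g 144)
     + ((X*X) * Ro g 432)
     + (-1) * ((X*X) * Ro g 468)
     + (-1) * ((X*X) * Ro g 528)
     + ((X*X) * Ro g 540)
     + (-1) * ((X*X) * Y * Ro g 32)
     + ((X*X) * Y * Ro g 48)
     + (-2) * ((X*X) * Y * Ro g 144)
     + ((X*X) * Y * Ro g 156)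
     + ((X*X) * Y * Ro g 168)
     + (-1) * ((X*X) * Y * Ro g 228)
     + ((X*X) * Y * Ro g 240)
     + (-1) * ((X*X) * Y * Ro g 336)
     + ((X*X) * Y * Ro g 352)
     + (-1) * ((X*X*X) * Ro g 528)
     + ((X*X*X) * Ro g 540)
     + ((X*X*X*X*X*X) * Ro g 9)
     + (-1) * (g 0)"
  unfolding Rd2_def Rd3_def Ro_def by (simp add: algebra_simps)

lemma RD2: "prime p \<Longrightarrow> 5 \<le> p \<Longrightarrow> int p dvd Rd2 (gg p t) (2 ^ t) k"
  unfolding Rd2_def by (rule D2rel)
lemma RD3: "prime p \<Longrightarrow> 5 \<le> p \<Longrightarrow> int p dvd Rd3 (gg p t) (3 ^ t) k"
  unfolding Rd3_def by (rule D3rel)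
lemma RO: "prime p \<Longrightarrow> 5 \<le> p \<Longrightarrow> even t \<Longrightarrow> 0 < t \<Longrightarrow> t < p - 1 \<Longrightarrow> i \<le> 2304 \<Longrightarrow> int p dvd Ro (gg p t) i"
  unfolding Ro_def by (rule Orel)

lemma rhs_part:
  fixes p t :: nat
  assumes pr: "prime p" and p5: "5 \<le> p" and tev: "even t" and t0: "0 < t" and tp: "t < p - 1"
  shows "int p dvd (
       64 ^ t * Ssum p t 0 (1/256)
     + (12 ^ t + 18 ^ t) * Ssum p t (1/16) (5/72)
     + 12 ^ t * Ssum p t (5/72) (7/96)
     + (6 ^ t + 12 ^ t) * Ssum p t (7/48) (11/72)
     + (6 ^ t + 12 ^ t) * Ssum p t (13/72) (3/16)
     + (4 ^ t + 8 ^ t + 12 ^ t) * Ssum p t (11/48) (15/64)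
     + 18 ^ t * Ssum p t (19/72) (17/64)
     + (4 ^ t + 8 ^ t + 12 ^ t + 18 ^ t) * Ssum p t (17/64) (13/48)
     + 18 ^ t * Ssum p t (19/48) (29/72)
     + 12 ^ t * Ssum p t (41/96) (7/16)
     + (2 ^ t + 4 ^ t + 6 ^ t + 8 ^ t) * Ssum p t (15/32) (23/48)
     + (2 ^ t + 4 ^ t + 6 ^ t + 8 ^ t + 12 ^ t) * Ssum p t (23/48) (31/64)
     + (2 ^ t + 4 ^ t + 6 ^ t + 8 ^ t + 12 ^ t + 16 ^ t) * Ssum p t (31/64) (35/72)
     + (2 ^ t + 4 ^ t + 8 ^ t + 16 ^ t) * Ssum p t (35/72) (63/128)
     + (2 ^ t + 4 ^ t + 8 ^ t + 16 ^ t + 32 ^ t) * Ssum p t (63/128) (127/256)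
     + (2 ^ t + 4 ^ t + 8 ^ t + 16 ^ t + 32 ^ t + 64 ^ t) * Ssum p t (127/256) (1/2)) - gg p t 576"
proof -
  have ss0: "Ssum p t 0 (1/256) = gg p t 9 - gg p t 0" unfolding gg0 by (simp add: gg_def)
  have ss1: "Ssum p t (1/16) (5/72) = gg p t 160 - gg p t 144" using gg_Ssum[OF pr p5, of 144 160 t] by simp
  have ss2: "Ssum p t (5/72) (7/96) = gg p t 168 - gg p t 160" using gg_Ssum[OF pr p5, of 160 168 t] by simp
  have ss3: "Ssum p t (7/48) (11/72) = gg p t 352 - gg p t 336" using gg_Ssum[OF pr p5, of 336 352 t] by simp
  have ss4: "Ssum p t (13/72) (3/16) = gg p t 432 - gg p t 416" using gg_Ssum[OF pr p5, of 416 432 t] by simp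
  have ss5: "Ssum p t (11/48) (15/64) = gg p t 540 - gg p t 528" using gg_Ssum[OF pr p5, of 528 540 t] by simp
  have ss6: "Ssum p t (19/72) (17/64) = gg p t 612 - gg p t 608" using gg_Ssum[OF pr p5, of 608 612 t] by simp
  have ss7: "Ssum p t (17/64) (13/48) = gg p t 624 - gg p t 612" using gg_Ssum[OF pr p5, of 612 624 t] by simp
  have ss8: "Ssum p t (19/48) (29/72) = gg p t 928 - gg p t 912" using gg_Ssum[OF pr p5, of 912 928 t] by simp
  have ss9: "Ssum p t (41/96) (7/16) = gg p t 1008 - gg p t 984" using gg_Ssum[OF pr p5, of 984 1008 t] by simp
  have ss10: "Ssum p t (15/32) (23/48) = gg p t 1104 - gg p t 1080" using gg_Ssum[OF pr p5, of 1080 1104 t] by simp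
  have ss11: "Ssum p t (23/48) (31/64) = gg p t 1116 - gg p t 1104" using gg_Ssum[OF pr p5, of 1104 1116 t] by simp
  have ss12: "Ssum p t (31/64) (35/72) = gg p t 1120 - gg p t 1116" using gg_Ssum[OF pr p5, of 1116 1120 t] by simp
  have ss13: "Ssum p t (35/72) (63/128) = gg p t 1134 - gg p t 1120" using gg_Ssum[OF pr p5, of 1120 1134 t] by simp
  have ss14: "Ssum p t (63/128) (127/256) = gg p t 1143 - gg p t 1134" using gg_Ssum[OF pr p5, of 1134 1143 t] by simp
  have ss15: "Ssum p t (127/256) (1/2) = gg p t 1152 - gg p t 1143" using gg_Ssum[OF pr p5, of 1143 1152 t] by simp
  have pw0: "(4::int) ^ t = 2 ^ t * 2 ^ t" by (simp flip: power_mult_distrib)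
  have pw1: "(6::int) ^ t = 2 ^ t * 3 ^ t" by (simp flip: power_mult_distrib)
  have pw2: "(8::int) ^ t = 2 ^ t * 2 ^ t * 2 ^ t" by (simp flip: power_mult_distrib)
  have pw3: "(12::int) ^ t = 2 ^ t * 2 ^ t * 3 ^ t" by (simp flip: power_mult_distrib)
  have pw4: "(16::int) ^ t = 2 ^ t * 2 ^ t * 2 ^ t * 2 ^ t" by (simp flip: power_mult_distrib)
  have pw5: "(18::int) ^ t = 2 ^ t * (3 ^ t * 3 ^ t)" by (simp flip: power_mult_distrib)
  have pw6: "(32::int) ^ t = 2 ^ t * 2 ^ t * 2 ^ t * 2 ^ t * 2 ^ t" by (simp flip: power_mult_distrib)
  have pw7: "(64::int) ^ t = 2 ^ t * 2 ^ t * 2 ^ t * 2 ^ t * 2 ^ t * 2 ^ t" by (simp flip: power_mult_distrib)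
  show ?thesis unfolding ss0 ss1 ss2 ss3 ss4 ss5 ss6 ss7 ss8 ss9 ss10 ss11 ss12 ss13 ss14 ss15 pw0 pw1 pw2 pw3 pw4 pw5 pw6 pw7 comb[where g="gg p t" and X="2 ^ t" and Y="3 ^ t"]
    by (intro dvd_add dvd_mult RD2[OF pr p5] RD3[OF pr p5] RO[OF pr p5 tev t0 tp]) (simp_all add: gg0)
qed

lemma rat_cong_intI: "int p dvd a - b \<Longrightarrow> rat_cong p (of_int a) (of_int b)"
  unfolding rat_cong_def
  by (rule exI[of _ "a - b"], rule exI[of _ 1]) simp

lemma dvd_key: "(m::int) dvd a - c \<Longrightarrow> m dvd b - c \<Longrightarrow> m dvd a - b"
  by (metis diff_diff_eq2 diff_add_cancel dvd_diff add_diff_cancel_right')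

theorem mainTheorem8:
  fixes p k t :: nat
  assumes "prime p" and "p \<ge> 5" and "1 \<le> k" and "2 * k \<le> p - 3"
    and "t = p - 1 - 2 * k"
  shows "rat_cong p ((-1) ^ k * 4 ^ (2 * k - 1) * euler_num t)
    (of_int (
       64 ^ t * Ssum p t 0 (1/256)
     + (12 ^ t + 18 ^ t) * Ssum p t (1/16) (5/72)
     + 12 ^ t * Ssum p t (5/72) (7/96)
     + (6 ^ t + 12 ^ t) * Ssum p t (7/48) (11/72)
     + (6 ^ t + 12 ^ t) * Ssum p t (13/72) (3/16)
     + (4 ^ t + 8 ^ t + 12 ^ t) * Ssum p t (11/48) (15/64)
     + 18 ^ t * Ssum p t (19/72) (17/64)
     + (4 ^ t + 8 ^ t + 12 ^ t + 18 ^ t) * Ssum p t (17/64) (13/48)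
     + 18 ^ t * Ssum p t (19/48) (29/72)
     + 12 ^ t * Ssum p t (41/96) (7/16)
     + (2 ^ t + 4 ^ t + 6 ^ t + 8 ^ t) * Ssum p t (15/32) (23/48)
     + (2 ^ t + 4 ^ t + 6 ^ t + 8 ^ t + 12 ^ t) * Ssum p t (23/48) (31/64)
     + (2 ^ t + 4 ^ t + 6 ^ t + 8 ^ t + 12 ^ t + 16 ^ t) * Ssum p t (31/64) (35/72)
     + (2 ^ t + 4 ^ t + 8 ^ t + 16 ^ t) * Ssum p t (35/72) (63/128)
     + (2 ^ t + 4 ^ t + 8 ^ t + 16 ^ t + 32 ^ t) * Ssum p t (63/128) (127/256)
     + (2 ^ t + 4 ^ t + 8 ^ t + 16 ^ t + 32 ^ t + 64 ^ t) * Ssum p t (127/256) (1/2)))"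
proof -
  have podd: "odd p" using prime_odd_nat[OF assms(1)] assms(2) by simp
  then obtain n where pn: "p = 2 * n + 1" by (metis oddE)
  have tev: "even t" using assms(5) pn by simp
  have t0: "0 < t" using assms by arith
  have tp: "t < p - 1" using assms by arith
  have L: "int p dvd (-1) ^ k * 4 ^ (2 * k - 1) * ei t - gg p t 576"
    by (rule euler_part[OF assms])
  have Leq: "(-1) ^ k * 4 ^ (2 * k - 1) * euler_num t = of_int ((-1) ^ k * 4 ^ (2 * k - 1) * ei t)"
    by (simp add: ei_eq)
  show ?thesis unfolding Leq
    by (rule rat_cong_intI, rule dvd_key[OF L rhs_part[OF assms(1) assms(2) tev t0 tp]])
qed

end
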